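(* Let $\Sigma=(\mathbb{N}_0,X,U,\mathscr{U},\phi)$ be a control system as in the standing setup and let $Q\subset X$ be a control set with $\operatorname{cl}\operatorname{Int}(Q)=\operatorname{cl}Q$. Then $Q$ is either mean equi-invariant or mean unstable.
   Context: Standing setup: $(X,d)$ is a metric space, $U$ is a compact metric space, and $F:X\times U\to X$ is a map such that $F_u:=F(\cdot,u)$ is continuous for every $u\in U$. Let $\mathscr U=U^{\mathbb N_0}$ with the product topology. For $\omega=(\omega_0,\omega_1,\dots)\in\mathscr U$, $x\in X$, set $\phi(0,x,\omega)=x$ and $\phi(k,x,\omega)=F_{\omega_{k-1}}\circ\cdots\circ F_{\omega_0}(x)$ for $k\ge1$. It is assumed that $\phi:\mathbb N_0\times X\times\mathscr U\to X$ is continuous. Notation: $B(x,\delta)$ is the open ball; $d(y,Q)=\inf_{q\in Q}d(y,q)$; $\operatorname{Int}$ and $\operatorname{cl}$ denote interior and closure in $X$. Control set: $D\subset X$ is a control set if (i) for every $x\in D$ there is $\omega\in\mathscr U$ with $\phi(k,x,\omega)\in D$ for all $k\in\mathbb N_0$; (ii) for every $x\in D$, $D\subset\operatorname{cl}\mathcal O^+(x)$, where $\mathcal O^+(x)=\{\phi(m,x,\omega):m\in\mathbb N_0,\omega\in\mathscr U\}$; (iii) $D$ is maximal with (i) and (ii). $x\in Q$ is a mean equi-invariant point of $Q$ if for every $\varepsilon>0$ there exist $\delta>0$ and $\omega\in\mathscr U$ such that $\limsup_{n\to\infty}\frac1n\sum_{i=0}^{n-1}d(\phi(i,y,\omega),Q)<\varepsilon$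 for all $y\in B(x,\delta)\cap Q$; $Q$ is mean equi-invariant if every point of $Q$ is such a point. $Q$ is mean unstable if there exists $\varepsilon>0$ such that for every $x\in Q$, every $\delta>0$ and every $\omega\in\mathscr U$ there exists $y\in B(x,\delta)\cap Q$ with $\limsup_{n\to\infty}\frac1n\sum_{i=0}^{n-1}d(\phi(i,y,\omega),Q)\ge\varepsilon$. *)

theory Defs
  imports "HOL-Analysis.Analysis" "HOL-Library.Liminf_Limsup"
begin

fun phi :: "('x \<Rightarrow> 'u \<Rightarrow> 'x) \<Rightarrow> nat \<Rightarrow> 'x \<Rightarrow> (nat \<Rightarrow> 'u) \<Rightarrow> 'x" where
  "phi F 0 x w = x"
| "phi F (Suc k) x w = F (phi F k x w) (w k)"

definition controls :: "'u set \<Rightarrow> (nat \<Rightarrow> 'u) set" where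
  "controls U = {w. \<forall>i. w i \<in> U}"

definition orbit_plus :: "('x \<Rightarrow> 'u \<Rightarrow> 'x) \<Rightarrow> 'u set \<Rightarrow> 'x \<Rightarrow> 'x set" where
  "orbit_plus F U x = {phi F m x w | m w. w \<in> controls U}"

definition cs_props :: "('x::topological_space \<Rightarrow> 'u \<Rightarrow> 'x) \<Rightarrow> 'u set \<Rightarrow> 'x set \<Rightarrow> bool" where
  "cs_props F U D \<longleftrightarrow>
     (\<forall>x\<in>D. \<exists>w\<in>controls U. \<forall>k. phi F k x w \<in> D) \<and>
     (\<forall>x\<in>D. D \<subseteq> closure (orbit_plus F U x))"

definition control_set :: "('x::topological_space \<Rightarrow> 'u \<Rightarrow> 'x) \<Rightarrow> 'u set \<Rightarrow> 'x set \<Rightarrow> bool" where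
  "control_set F U D \<longleftrightarrow> cs_props F U D \<and>
     (\<forall>D'. D \<subseteq> D' \<and> cs_props F U D' \<longrightarrow> D' = D)"

definition mean_dist :: "('x::metric_space \<Rightarrow> 'u \<Rightarrow> 'x) \<Rightarrow> 'x set \<Rightarrow> 'x \<Rightarrow> (nat \<Rightarrow> 'u) \<Rightarrow> ereal" where
  "mean_dist F Q y w = limsup (\<lambda>n. ereal ((1 / real n) * (\<Sum>i<n. infdist (phi F i y w) Q)))"

definition mean_equi_invariant_point :: "('x::metric_space \<Rightarrow> 'u \<Rightarrow> 'x) \<Rightarrow> 'u set \<Rightarrow> 'x set \<Rightarrow> 'x \<Rightarrow> bool" where
  "mean_equi_invariant_point F U Q x \<longleftrightarrow> x \<in> Q \<and>
     (\<forall>\<epsilon>>0. \<exists>\<delta>>0. \<exists>w\<in>controls U. \<forall>y\<in>ball x \<delta> \<inter> Q. mean_dist F Q y w < ereal \<epsilon>)"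

definition mean_equi_invariant :: "('x::metric_space \<Rightarrow> 'u \<Rightarrow> 'x) \<Rightarrow> 'u set \<Rightarrow> 'x set \<Rightarrow> bool" where
  "mean_equi_invariant F U Q \<longleftrightarrow> (\<forall>x\<in>Q. mean_equi_invariant_point F U Q x)"

definition mean_unstable :: "('x::metric_space \<Rightarrow> 'u \<Rightarrow> 'x) \<Rightarrow> 'u set \<Rightarrow> 'x set \<Rightarrow> bool" where
  "mean_unstable F U Q \<longleftrightarrow> (\<exists>\<epsilon>>0. \<forall>x\<in>Q. \<forall>\<delta>>0. \<forall>w\<in>controls U.
       \<exists>y\<in>ball x \<delta> \<inter> Q. mean_dist F Q y w \<ge> ereal \<epsilon>)"

end

theory Submission
  imports Defs
begin

lemma phi_prefix:
  "k \<le> m \<Longrightarrow> phi F k y (\<lambda>j. if j < m then w' j else w (j - m)) = phi F k y w'"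
  by (induction k) auto

lemma phi_concat:
  "phi F (m + i) y (\<lambda>j. if j < m then w' j else w (j - m)) = phi F i (phi F m y w') w"
proof (induction i)
  case 0 then show ?case using phi_prefix[of m m] by simp
next
  case (Suc i) then show ?case by simp
qed

lemma sum_split_shift: "(\<Sum>i<m + k. (a::nat\<Rightarrow>real) i) = (\<Sum>i<m. a i) + (\<Sum>i<k. a (m + i))"
  by (induction k) auto

lemma cesaro_shift:
  fixes a b :: "nat \<Rightarrow> real" and m :: nat and e :: real
  assumes b0: "\<And>i. b i \<ge> 0"
    and ab: "\<And>i. a (m + i) = b i"
    and lim: "limsup (\<lambda>n. ereal (1 / real n * (\<Sum>i<n. b i))) < ereal e"
  shows "limsup (\<lambda>n. ereal (1 / real n * (\<Sum>i<n. a i))) < ereal e"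
proof -
  obtain e' where e': "limsup (\<lambda>n. ereal (1 / real n * (\<Sum>i<n. b i))) < ereal e'" "e' < e"
    using ereal_dense2[OF lim] by auto
  have "eventually (\<lambda>n. ereal (1 / real n * (\<Sum>i<n. b i)) < ereal e') sequentially"
    using Limsup_lessD[OF e'(1)] by simp
  then obtain N where N: "\<And>n. n \<ge> N \<Longrightarrow> 1 / real n * (\<Sum>i<n. b i) < e'"
    by (auto simp: eventually_sequentially)
  define C where "C = (\<Sum>i<m. a i)"
  define d where "d = (e - e') / 2"
  have d: "d > 0" using e' by (simp add: d_def)
  obtain K :: nat where K: "\<bar>C\<bar> / d < K" using reals_Archimedean2 by blast
  have ev: "1 / real n * (\<Sum>i<n. a i) \<le> e' + d" if n: "n \<ge> N + m + K + 1" for n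
  proof -
    have nm: "n = m + (n - m)" using n by simp
    have "(\<Sum>i<n. a i) = C + (\<Sum>i<n-m. b i)"
    proof -
      have "(\<Sum>i<n. a i) = (\<Sum>i<m + (n-m). a i)" using nm by simp
      also have "\<dots> = (\<Sum>i<m. a i) + (\<Sum>i<n-m. a (m + i))"
        by (rule sum_split_shift)
      finally show ?thesis by (simp add: C_def ab)
    qed
    have pos: "real n > 0" using n by simp
    have s0: "(\<Sum>i<n-m. b i) \<ge> 0" using b0 by (simp add: sum_nonneg)
    have nmN: "n - m \<ge> N" "n - m > 0" using n by auto
    have bb: "(\<Sum>i<n-m. b i) < e' * real (n - m)"
      using N[OF nmN(1)] nmN(2) by (simp add: field_simps)
    have e'0: "(\<Sum>i<n-m. b i) \<le> max e' 0 * real n"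
    proof -
      have "(\<Sum>i<n-m. b i) \<le> max e' 0 * real (n-m)" using bb
        by (smt (verit) mult_right_mono of_nat_0_le_iff)
      also have "\<dots> \<le> max e' 0 * real n" by (intro mult_left_mono) auto
      finally show ?thesis .
    qed
    have Cn: "C \<le> d * real n"
    proof -
      have "\<bar>C\<bar> < d * real K" using K d by (simp add: field_simps)
      moreover have "real K \<le> real n" using n by simp
      ultimately show ?thesis using d by (smt (verit) mult_left_mono)
    qed
    have "C + (\<Sum>i<n-m. b i) \<le> (e' + d) * real n"
    proof (cases "e' \<ge> 0")
      case True then show ?thesis using e'0 Cn by (simp add: algebra_simps)
    next
      case False
      then have "(\<Sum>i<n-m. b i) < 0" using bb nmN(2)
        by (smt (verit) mult_neg_pos of_nat_0_less_iff)
      then show ?thesis using s0 by simp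
    qed
    then show ?thesis using pos \<open>(\<Sum>i<n. a i) = C + (\<Sum>i<n-m. b i)\<close>
      by (simp add: field_simps)
  qed
  have "limsup (\<lambda>n. ereal (1 / real n * (\<Sum>i<n. a i))) \<le> ereal (e' + d)"
  proof (rule Limsup_bounded)
    show "\<forall>\<^sub>F n in sequentially. ereal (1 / real n * (\<Sum>i<n. a i)) \<le> ereal (e' + d)"
      by (rule eventually_sequentiallyI[of "N+m+K+1"]) (use ev in simp)
  qed
  also have "\<dots> < ereal e" using e'(2) by (simp add: d_def field_simps)
  finally show ?thesis .
qed

lemma cont_phi_x:
  assumes "\<And>k. continuous_on (UNIV \<times> controls U) (\<lambda>(x, w). phi F k x w)"
    and "w \<in> controls U"
  shows "continuous_on UNIV (\<lambda>x. phi F k x w)"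
proof -
  have c1: "continuous_on UNIV (\<lambda>x. (x, w))" by (intro continuous_intros)
  have c2: "(\<lambda>x. (x, w)) ` UNIV \<subseteq> UNIV \<times> controls U" using assms(2) by auto
  have "continuous_on UNIV ((\<lambda>(x, w). phi F k x w) \<circ> (\<lambda>x. (x, w)))"
    by (rule continuous_on_compose[OF c1 continuous_on_subset[OF assms(1) c2]])
  then show ?thesis by (simp add: o_def)
qed

theorem mainTheorem12:
  fixes F :: "'x::metric_space \<Rightarrow> 'u::metric_space \<Rightarrow> 'x"
    and U :: "'u set" and Q :: "'x set"
  assumes "compact U"
    and "\<And>u. u \<in> U \<Longrightarrow> continuous_on UNIV (\<lambda>x. F x u)"
    and "\<And>k. continuous_on (UNIV \<times> controls U) (\<lambda>(x, w). phi F k x w)"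
    and "control_set F U Q"
    and "closure (interior Q) = closure Q"
  shows "mean_equi_invariant F U Q \<or> mean_unstable F U Q"
proof (rule disjCI)
  assume "\<not> mean_unstable F U Q"
  then have NU: "\<forall>\<epsilon>>0. \<exists>x\<in>Q. \<exists>\<delta>>0. \<exists>w\<in>controls U. \<forall>y\<in>ball x \<delta> \<inter> Q. mean_dist F Q y w < ereal \<epsilon>"
    unfolding mean_unstable_def by (auto simp: not_le)
  have orb: "\<And>z. z \<in> Q \<Longrightarrow> Q \<subseteq> closure (orbit_plus F U z)"
    using assms(4) unfolding control_set_def cs_props_def by blast
  show "mean_equi_invariant F U Q"
    unfolding mean_equi_invariant_def mean_equi_invariant_point_def
  proof (intro ballI conjI allI impI)
    fix z assume zQ: "z \<in> Q"
    show "z \<in> Q" by fact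
    fix \<epsilon> :: real assume "\<epsilon> > 0"
    then obtain x \<delta> w where xQ: "x \<in> Q" and \<delta>: "\<delta> > 0" and w: "w \<in> controls U"
      and H: "\<And>y. y \<in> ball x \<delta> \<inter> Q \<Longrightarrow> mean_dist F Q y w < ereal \<epsilon>"
      using NU by blast
    have "x \<in> closure (interior Q)" using xQ assms(5) closure_subset by blast
    then obtain p where p: "p \<in> interior Q" "dist p x < \<delta>"
      using \<delta> unfolding closure_approachable by blast
    define V where "V = ball x \<delta> \<inter> interior Q"
    have Vo: "open V" and pV: "p \<in> V" and VQ: "V \<subseteq> ball x \<delta> \<inter> Q"
      using p interior_subset unfolding V_def by (auto simp: dist_commute)
    have "p \<in> closure (orbit_plus F U z)" using orb[OF zQ] p(1) interior_subset by blast
    then have "orbit_plus F U z \<inter> V \<noteq> {}"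
      using Vo pV unfolding closure_iff_nhds_not_empty by blast
    then obtain q where "q \<in> orbit_plus F U z" "q \<in> V" by blast
    then obtain m w' where w': "w' \<in> controls U" and qV: "phi F m z w' \<in> V"
      unfolding orbit_plus_def by blast
    have "open ((\<lambda>y. phi F m y w') -` V)"
      using open_vimage[OF Vo cont_phi_x[OF assms(3) w']] .
    moreover have "z \<in> (\<lambda>y. phi F m y w') -` V" using qV by simp
    ultimately obtain \<delta>' where \<delta>': "\<delta>' > 0" "ball z \<delta>' \<subseteq> (\<lambda>y. phi F m y w') -` V"
      using open_contains_ball by blast
    define w'' where "w'' = (\<lambda>j. if j < m then w' j else w (j - m))"
    have w'': "w'' \<in> controls U" using w w' unfolding w''_def controls_def by auto
    show "\<exists>\<delta>>0. \<exists>w\<in>controls U. \<forall>y\<in>ball z \<delta> \<inter> Q. mean_dist F Q y w < ereal \<epsilon>"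
    proof (intro exI[of _ \<delta>'] conjI bexI[of _ w''] ballI)
      fix y assume y: "y \<in> ball z \<delta>' \<inter> Q"
      then have "phi F m y w' \<in> V" using \<delta>'(2) by blast
      then have "mean_dist F Q (phi F m y w') w < ereal \<epsilon>" using H VQ by blast
      then show "mean_dist F Q y w'' < ereal \<epsilon>"
        unfolding mean_dist_def
        by (rule cesaro_shift[where m=m, rotated 2]) (auto simp: w''_def phi_concat infdist_nonneg)
    qed (use \<delta>' w'' in auto)
  qed
qed

end
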